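(* For each $n$, the map sending a UEC-representative $\mathcal{U}$ on vertex set $[n]$ to its DAG-reduction $\mathcal{D}^\mathcal{U}$ is injective; hence it is a bijection between the set of UEC-representatives on $[n]$ and the set of their DAG-reductions.
   Context: A UEC-representative on $[n]$ is an undirected graph equal to the unconditional dependence graph $\mathcal{U}^\mathcal{D}$ of some DAG $\mathcal{D}$ on $[n]$ ($\mathcal{U}^\mathcal{D}$ joins distinct $v,w$ iff there is a trek, i.e. a collider-free path without repeated vertices, between them). $\mathtt{init\_CPDAG}(\mathcal{U})$ is obtained from $\mathcal{U}$ by orienting, for every induced path $v-v'-v''$, its edges as $v\to v'\leftarrow v''$, then removing edges that received both orientations, directing edges that received one, and leaving the rest undirected. For $\mathcal{G}=\mathtt{init\_CPDAG}(\mathcal{U})$ and a vertex $v$, the chain component $\mathrm{cc}_\mathcal{G}(v)$ is the set of vertices joined to $v$ by a path of undirected edges (including $v$). The DAG-reduction $\mathcal{D}^\mathcal{U}$ has as vertices the chain components of $\mathcal{G}$ (subsets of $[n]$) and an edge $\mathbf{v}\to\mathbf{w}$ iff some $v\in\mathbf{v}$, $w\in\mathbf{w}$ satisfy $v\to w$ in $\mathcal{G}$. *)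

theory Defs
  imports Main
begin

text \<open>A directed graph is a relation (set of ordered
pairs (v,w) meaning v -> w). An undirected graph is a symmetric irreflexive
relation (both (v,w) and (w,v) present for an edge v - w).\<close>

definition vset :: "nat \<Rightarrow> nat set" where
  "vset n = {1..n}"

definition is_dag :: "nat \<Rightarrow> (nat \<times> nat) set \<Rightarrow> bool" where
  "is_dag n D \<longleftrightarrow> D \<subseteq> vset n \<times> vset n \<and> acyclic D"

definition is_trek :: "(nat \<times> nat) set \<Rightarrow> nat list \<Rightarrow> nat \<Rightarrow> nat \<Rightarrow> bool" where
  "is_trek D p v w \<longleftrightarrow>
     p \<noteq> [] \<and> hd p = v \<and> last p = w \<and> distinct p \<and>
     (\<forall>i. Suc i < length p \<longrightarrow> (p!i, p!Suc i) \<in> D \<or> (p!Suc i, p!i) \<in> D) \<and>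
     (\<forall>i. Suc (Suc i) < length p \<longrightarrow>
        \<not> ((p!i, p!Suc i) \<in> D \<and> (p!Suc (Suc i), p!Suc i) \<in> D))"

definition udg :: "nat \<Rightarrow> (nat \<times> nat) set \<Rightarrow> (nat \<times> nat) set" where
  "udg n D = {(v, w). v \<in> vset n \<and> w \<in> vset n \<and> v \<noteq> w \<and> (\<exists>p. is_trek D p v w)}"

definition UEC_rep :: "nat \<Rightarrow> (nat \<times> nat) set \<Rightarrow> bool" where
  "UEC_rep n U \<longleftrightarrow> (\<exists>D. is_dag n D \<and> U = udg n D)"

text \<open>init_CPDAG(U): every induced path a - b - c marks a -> b and c -> b.\<close>

definition cpdag_marks :: "(nat \<times> nat) set \<Rightarrow> (nat \<times> nat) set" where
  "cpdag_marks U = {(a, b). \<exists>c. (a, b) \<in> U \<and> (c, b) \<in> U \<and> a \<noteq> c \<and> (a, c) \<notin> U}"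

definition cpdag_dir :: "(nat \<times> nat) set \<Rightarrow> (nat \<times> nat) set" where
  "cpdag_dir U = {(a, b). (a, b) \<in> cpdag_marks U \<and> (b, a) \<notin> cpdag_marks U}"

definition cpdag_undir :: "(nat \<times> nat) set \<Rightarrow> (nat \<times> nat) set" where
  "cpdag_undir U = {(a, b). (a, b) \<in> U \<and> (a, b) \<notin> cpdag_marks U \<and> (b, a) \<notin> cpdag_marks U}"

definition chain_comp :: "(nat \<times> nat) set \<Rightarrow> nat \<Rightarrow> nat set" where
  "chain_comp U v = {w. (v, w) \<in> (cpdag_undir U)\<^sup>*}"

definition dag_reduction :: "nat \<Rightarrow> (nat \<times> nat) set \<Rightarrow> nat set set \<times> (nat set \<times> nat set) set" where
  "dag_reduction n U =
     (chain_comp U ` vset n,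
      {(chain_comp U v, chain_comp U w) | v w. (v, w) \<in> cpdag_dir U})"

end

theory Submission
  imports Defs
begin

definition nbh :: "(nat \<times> nat) set \<Rightarrow> nat \<Rightarrow> nat set" where
  "nbh U a = insert a {y. (a,y) \<in> U}"

definition peaked :: "(nat \<times> nat) set \<Rightarrow> nat list \<Rightarrow> nat \<Rightarrow> bool" where
  "peaked D p k \<longleftrightarrow> (\<forall>i. i < k \<and> Suc i < length p \<longrightarrow> (p!Suc i, p!i) \<in> D) \<and>
                      (\<forall>i. k \<le> i \<and> Suc i < length p \<longrightarrow> (p!i, p!Suc i) \<in> D)"

lemma back_path:
  assumes "(t,v) \<in> D\<^sup>*"
  shows "\<exists>q. q \<noteq> [] \<and> hd q = v \<and> last q = t \<and> distinct q \<and> (\<forall>i. Suc i < length q \<longrightarrow> (q!Suc i, q!i) \<in> D)"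
  using assms
proof (induction rule: rtrancl_induct)
  case base
  then show ?case by (rule exI[of _ "[t]"]) simp
next
  case (step y z)
  then obtain q where q: "q\<noteq>[]" "hd q = y" "last q = t" "distinct q" "\<forall>i. Suc i < length q \<longrightarrow> (q!Suc i, q!i)\<in>D" by blast
  show ?case
  proof (cases "z \<in> set q")
    case False
    show ?thesis
    proof (rule exI[of _ "z#q"], intro conjI allI impI)
      fix i assume "Suc i < length (z#q)"
      then show "((z#q)!Suc i, (z#q)!i)\<in>D"
        using q step.hyps(2) by (cases i) (auto simp: hd_conv_nth)
    qed (use q False in auto)
  next
    case True
    then obtain j where j: "j < length q" "q!j = z" by (auto simp: in_set_conv_nth)
    show ?thesis
    proof (rule exI[of _ "drop j q"], intro conjI allI impI)
      fix i assume "Suc i < length (drop j q)"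
      then show "((drop j q)!Suc i, (drop j q)!i)\<in>D" using q(5)[rule_format, of "j+i"] by simp
    qed (use q j in \<open>auto simp: hd_drop_conv_nth\<close>)
  qed
qed

lemma fwd_path:
  assumes "(t,w) \<in> D\<^sup>*" and "p\<noteq>[]" "hd p = v" "last p = t" "distinct p" "peaked D p k"
  shows "\<exists>p k. p\<noteq>[] \<and> hd p = v \<and> last p = w \<and> distinct p \<and> peaked D p k"
  using assms(1)
proof (induction rule: rtrancl_induct)
  case base
  then show ?case using assms by blast
next
  case (step y x)
  then obtain p k where p: "p\<noteq>[]" "hd p = v" "last p = y" "distinct p" "peaked D p k" by blast
  show ?case
  proof (cases "x \<in> set p")
    case False
    have pk: "peaked D (p@[x]) (min k (length p - 1))"
      unfolding peaked_def
    proof (intro conjI allI impI)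
      fix i assume i: "i < min k (length p - 1) \<and> Suc i < length (p@[x])"
      then have "i < k" "Suc i < length p" by auto
      then show "((p@[x])!Suc i, (p@[x])!i) \<in> D" using p(5) unfolding peaked_def
        by (simp add: nth_append)
    next
      fix i assume i: "min k (length p - 1) \<le> i \<and> Suc i < length (p@[x])"
      show "((p@[x])!i, (p@[x])!Suc i) \<in> D"
      proof (cases "Suc i < length p")
        case True
        then have "k \<le> i" using i by auto
        then show ?thesis using True p(5) unfolding peaked_def by (simp add: nth_append)
      next
        case False
        then have "Suc i = length p" using i by auto
        then have "p!i = y" using p(1,3) by (metis diff_Suc_1 last_conv_nth)
        then show ?thesis using \<open>Suc i = length p\<close> step.hyps(2) by (simp add: nth_append)
      qed
    qed
    show ?thesis
      by (rule exI[of _ "p@[x]"], rule exI[of _ "min k (length p - 1)"]) (use p False pk in auto)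
  next
    case True
    then obtain j where j: "j < length p" "p!j = x" by (auto simp: in_set_conv_nth)
    have pk: "peaked D (take (Suc j) p) k"
      using p(5) j unfolding peaked_def by auto
    have "last (take (Suc j) p) = x"
    proof -
      have "take (Suc j) p \<noteq> []" using j p(1) by (simp add: take_eq_Nil)
      moreover have "length (take (Suc j) p) = Suc j" using j by simp
      ultimately have "last (take (Suc j) p) = take (Suc j) p ! j"
        by (simp add: last_conv_nth)
      then show ?thesis using j by simp
    qed
    then show ?thesis
      by (intro exI[of _ "take (Suc j) p"] exI[of _ k]) (use p j pk in auto)
  qed
qed

lemma acyc2: "acyclic D \<Longrightarrow> (a,b) \<in> D \<Longrightarrow> (b,a) \<in> D \<Longrightarrow> False"
  unfolding acyclic_def by (meson r_into_trancl trancl_into_trancl)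

lemma common_anc_trek:
  assumes "acyclic D" "(t,v)\<in>D\<^sup>*" "(t,w)\<in>D\<^sup>*"
  shows "\<exists>p. is_trek D p v w"
proof -
  obtain q where q: "q \<noteq> []" "hd q = v" "last q = t" "distinct q" "\<forall>i. Suc i < length q \<longrightarrow> (q!Suc i, q!i) \<in> D"
    using back_path[OF assms(2)] by blast
  have "peaked D q (length q)" using q(5) unfolding peaked_def by auto
  then obtain p k where p: "p\<noteq>[]" "hd p = v" "last p = w" "distinct p" "peaked D p k"
    using fwd_path[OF assms(3) q(1-4)] by blast
  have e: "\<forall>i. Suc i < length p \<longrightarrow> (p!i, p!Suc i) \<in> D \<or> (p!Suc i, p!i) \<in> D"
  proof (intro allI impI)
    fix i assume "Suc i < length p"
    then show "(p!i, p!Suc i) \<in> D \<or> (p!Suc i, p!i) \<in> D"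
      using p(5) unfolding peaked_def by (cases "i < k") auto
  qed
  have c: "\<forall>i. Suc (Suc i) < length p \<longrightarrow> \<not> ((p!i, p!Suc i) \<in> D \<and> (p!Suc (Suc i), p!Suc i) \<in> D)"
  proof (intro allI impI notI)
    fix i assume l: "Suc (Suc i) < length p" and h: "(p!i, p!Suc i) \<in> D \<and> (p!Suc (Suc i), p!Suc i) \<in> D"
    show False
    proof (cases "i < k")
      case True
      then have "(p!Suc i, p!i) \<in> D" using p(5) l unfolding peaked_def by auto
      then show False using h acyc2[OF assms(1)] by blast
    next
      case False
      then have "(p!Suc i, p!Suc (Suc i)) \<in> D" using p(5) l unfolding peaked_def by auto
      then show False using h acyc2[OF assms(1)] by blast
    qed
  qed
  show ?thesis unfolding is_trek_def using p e c by blast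
qed

lemma walk_anc:
  "p \<noteq> [] \<Longrightarrow> (\<forall>i. Suc i < length p \<longrightarrow> (p!i, p!Suc i) \<in> D \<or> (p!Suc i, p!i) \<in> D) \<Longrightarrow>
   (\<forall>i. Suc (Suc i) < length p \<longrightarrow> \<not> ((p!i, p!Suc i) \<in> D \<and> (p!Suc (Suc i), p!Suc i) \<in> D)) \<Longrightarrow>
   (\<exists>t. (t, hd p) \<in> D\<^sup>* \<and> (t, last p) \<in> D\<^sup>*) \<and> (2 \<le> length p \<and> (p!1, p!0) \<notin> D \<longrightarrow> (hd p, last p) \<in> D\<^sup>*)"
proof (induction p)
  case Nil
  then show ?case by simp
next
  case (Cons x p')
  show ?case
  proof (cases "p' = []")
    case True
    then show ?thesis by auto
  next
    case False
    have e: "\<forall>i. Suc i < length p' \<longrightarrow> (p'!i, p'!Suc i) \<in> D \<or> (p'!Suc i, p'!i) \<in> D"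
      using Cons.prems(2) by (metis Suc_less_eq length_Cons nth_Cons_Suc)
    have c: "\<forall>i. Suc (Suc i) < length p' \<longrightarrow> \<not> ((p'!i, p'!Suc i) \<in> D \<and> (p'!Suc (Suc i), p'!Suc i) \<in> D)"
      using Cons.prems(3) by (metis Suc_less_eq length_Cons nth_Cons_Suc)
    note IH = Cons.IH[OF False e c]
    obtain t where t: "(t, hd p') \<in> D\<^sup>*" "(t, last p') \<in> D\<^sup>*" using IH by blast
    have y: "hd p' = p'!0" using False by (simp add: hd_conv_nth)
    have e0: "(x, hd p') \<in> D \<or> (hd p', x) \<in> D" using Cons.prems(2)[rule_format, of 0] False y by simp
    have lst: "last (x#p') = last p'" using False by simp
    show ?thesis
    proof (cases "(hd p', x) \<in> D")
      case True
      have "(t, x) \<in> D\<^sup>*" using t(1) True by (rule rtrancl_into_rtrancl)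
      then show ?thesis using t(2) lst True y by auto
    next
      case nd: False
      then have xy: "(x, hd p') \<in> D" using e0 by blast
      have "(x, last p') \<in> D\<^sup>*"
      proof (cases "2 \<le> length p'")
        case True
        have "\<not> ((x, p'!0) \<in> D \<and> (p'!1, p'!0) \<in> D)"
          using Cons.prems(3)[rule_format, of 0] True by simp
        then have "(p'!1, p'!0) \<notin> D" using xy y by simp
        then have "(hd p', last p') \<in> D\<^sup>*" using IH True by simp
        then show ?thesis using xy by (simp add: converse_rtrancl_into_rtrancl)
      next
        case False
        then have "last p' = hd p'" using \<open>p' \<noteq> []\<close>
          by (cases p') (auto simp: Suc_le_eq)
        then show ?thesis using xy by simp
      qed
      then show ?thesis using lst by auto
    qed
  qed
qed

lemma trek_anc: "is_trek D p v w \<Longrightarrow> \<exists>t. (t, v) \<in> D\<^sup>* \<and> (t, w) \<in> D\<^sup>*"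
  unfolding is_trek_def using walk_anc[of p D] by blast

lemma udg_char:
  assumes "is_dag n D"
  shows "(a,b) \<in> udg n D \<longleftrightarrow> a \<in> vset n \<and> b \<in> vset n \<and> a \<noteq> b \<and> (\<exists>t. (t,a) \<in> D\<^sup>* \<and> (t,b) \<in> D\<^sup>*)"
  using assms trek_anc common_anc_trek unfolding udg_def is_dag_def by blast

lemma source_exists:
  assumes "is_dag n D"
  shows "\<exists>s. (s,t) \<in> D\<^sup>* \<and> (\<forall>x. (x,s) \<notin> D)"
proof -
  have "finite D" using assms unfolding is_dag_def vset_def
    by (meson finite_SigmaI finite_atLeastAtMost finite_subset)
  then have wf: "wf D" using assms finite_acyclic_wf unfolding is_dag_def by blast
  have "t \<in> {s. (s,t) \<in> D\<^sup>*}" by simp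
  then obtain s where s: "s \<in> {s. (s,t) \<in> D\<^sup>*}" "\<forall>y. (y,s) \<in> D \<longrightarrow> y \<notin> {s. (s,t) \<in> D\<^sup>*}"
    using wf unfolding wf_eq_minimal by metis
  have "\<forall>x. (x,s) \<notin> D"
  proof (intro allI notI)
    fix x assume "(x,s) \<in> D"
    moreover have "(s,t) \<in> D\<^sup>*" using s(1) by simp
    ultimately have "(x,t) \<in> D\<^sup>*" by (rule converse_rtrancl_into_rtrancl)
    then show False using s(2) \<open>(x,s) \<in> D\<close> by blast
  qed
  then show ?thesis using s(1) by blast
qed

lemma anc_in_vset:
  assumes "is_dag n D" "(s,a) \<in> D\<^sup>*" "a \<in> vset n"
  shows "s \<in> vset n"
  using assms(2)
proof (cases rule: converse_rtranclE)
  case base then show ?thesis using assms by simp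
next
  case (step y) then show ?thesis using assms unfolding is_dag_def by blast
qed

lemma uec_props:
  assumes "UEC_rep n U"
  shows "U \<subseteq> vset n \<times> vset n" "\<forall>a b. (a,b) \<in> U \<longrightarrow> (b,a) \<in> U" "\<forall>a. (a,a) \<notin> U"
    "\<forall>a b. (a,b) \<in> U \<longrightarrow> (\<exists>s. s \<in> nbh U a \<and> s \<in> nbh U b \<and> nbh U s \<subseteq> nbh U a \<and> nbh U s \<subseteq> nbh U b)"
proof -
  obtain D where D: "is_dag n D" "U = udg n D" using assms unfolding UEC_rep_def by blast
  note ch = udg_char[OF D(1)]
  show "U \<subseteq> vset n \<times> vset n" using D(2) ch by auto
  show "\<forall>a b. (a,b) \<in> U \<longrightarrow> (b,a) \<in> U" using D(2) ch by blast
  show "\<forall>a. (a,a) \<notin> U" using D(2) ch by blast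
  have key: "nbh U s \<subseteq> nbh U a \<and> s \<in> nbh U a"
    if s: "\<forall>x. (x,s) \<notin> D" "(s,a) \<in> D\<^sup>*" and a: "a \<in> vset n" for s a
  proof -
    have sa: "s \<in> nbh U a"
    proof (cases "s = a")
      case True then show ?thesis unfolding nbh_def by simp
    next
      case False
      have "s \<in> vset n" using anc_in_vset[OF D(1) s(2) a] .
      then have "(a,s) \<in> U" using D(2) ch False a s(2) by blast
      then show ?thesis unfolding nbh_def by simp
    qed
    have "nbh U s \<subseteq> nbh U a"
    proof
      fix y assume "y \<in> nbh U s"
      then consider "y = s" | "(s,y) \<in> U" unfolding nbh_def by blast
      then show "y \<in> nbh U a"
      proof cases
        case 1 then show ?thesis using sa by simp
      next
        case 2
        then obtain t where t: "(t,s) \<in> D\<^sup>*" "(t,y) \<in> D\<^sup>*" "y \<in> vset n" using D(2) ch by blast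
        have "t = s" using t(1) s(1) by (cases rule: rtranclE) auto
        then have "(s,y) \<in> D\<^sup>*" using t(2) by simp
        then have "y = a \<or> (a,y) \<in> U" using D(2) ch s(2) a t(3) by blast
        then show ?thesis unfolding nbh_def by blast
      qed
    qed
    then show ?thesis using sa by simp
  qed
  show "\<forall>a b. (a,b) \<in> U \<longrightarrow> (\<exists>s. s \<in> nbh U a \<and> s \<in> nbh U b \<and> nbh U s \<subseteq> nbh U a \<and> nbh U s \<subseteq> nbh U b)"
  proof (intro allI impI)
    fix a b assume "(a,b) \<in> U"
    then obtain t where t: "(t,a) \<in> D\<^sup>*" "(t,b) \<in> D\<^sup>*" "a \<in> vset n" "b \<in> vset n" using D(2) ch by blast
    obtain s where s: "(s,t) \<in> D\<^sup>*" "\<forall>x. (x,s) \<notin> D" using source_exists[OF D(1)] by blast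
    have "(s,a) \<in> D\<^sup>*" "(s,b) \<in> D\<^sup>*" using s(1) t(1,2) by auto
    then show "\<exists>s. s \<in> nbh U a \<and> s \<in> nbh U b \<and> nbh U s \<subseteq> nbh U a \<and> nbh U s \<subseteq> nbh U b"
      using key[OF s(2)] t(3,4) by blast
  qed
qed

definition recov :: "nat \<Rightarrow> nat set set \<times> (nat set \<times> nat set) set \<Rightarrow> (nat \<times> nat) set" where
  "recov n R = {(v,w). v \<in> vset n \<and> w \<in> vset n \<and> v \<noteq> w \<and>
     (\<exists>C\<in>fst R. \<exists>C'\<in>fst R. v \<in> C \<and> w \<in> C' \<and>
        (C = C' \<or> (C,C') \<in> snd R \<or> (C',C) \<in> snd R \<or> (\<exists>X. (X,C) \<in> snd R \<and> (X,C') \<in> snd R)))}"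

context
  fixes n :: nat and U :: "(nat \<times> nat) set"
  assumes U1: "U \<subseteq> vset n \<times> vset n"
    and Usym: "\<forall>a b. (a,b) \<in> U \<longrightarrow> (b,a) \<in> U"
    and Uirr: "\<forall>a. (a,a) \<notin> U"
    and Usrc: "\<forall>a b. (a,b) \<in> U \<longrightarrow> (\<exists>s. s \<in> nbh U a \<and> s \<in> nbh U b \<and> nbh U s \<subseteq> nbh U a \<and> nbh U s \<subseteq> nbh U b)"
begin

lemma nbh_sym: "x \<in> nbh U y \<longleftrightarrow> y \<in> nbh U x"
  using Usym unfolding nbh_def by blast

lemma mark_iff:
  assumes ab: "(a,b) \<in> U"
  shows "(a,b) \<in> cpdag_marks U \<longleftrightarrow> \<not> nbh U b \<subseteq> nbh U a"
proof
  assume "(a,b) \<in> cpdag_marks U"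
  then obtain c where c: "(c,b) \<in> U" "a \<noteq> c" "(a,c) \<notin> U" unfolding cpdag_marks_def by blast
  have "c \<in> nbh U b" using c(1) Usym unfolding nbh_def by blast
  moreover have "c \<notin> nbh U a" using c(2,3) unfolding nbh_def by blast
  ultimately show "\<not> nbh U b \<subseteq> nbh U a" by blast
next
  assume "\<not> nbh U b \<subseteq> nbh U a"
  then obtain c where c: "c \<in> nbh U b" "c \<notin> nbh U a" by blast
  have "b \<in> nbh U a" using ab unfolding nbh_def by blast
  then have "c \<noteq> b" using c by blast
  then have "(b,c) \<in> U" using c(1) unfolding nbh_def by blast
  then have "(c,b) \<in> U" using Usym by blast
  moreover have "a \<noteq> c" "(a,c) \<notin> U" using c(2) unfolding nbh_def by auto
  ultimately show "(a,b) \<in> cpdag_marks U" using ab unfolding cpdag_marks_def by blast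
qed

lemma undir_iff: "(a,b) \<in> cpdag_undir U \<longleftrightarrow> (a,b) \<in> U \<and> nbh U a = nbh U b"
proof -
  have "(a,b) \<in> U \<Longrightarrow> (b,a) \<in> U" using Usym by blast
  then show ?thesis unfolding cpdag_undir_def using mark_iff[of a b] mark_iff[of b a] by blast
qed

lemma dir_iff: "(a,b) \<in> cpdag_dir U \<longleftrightarrow> (a,b) \<in> U \<and> nbh U a \<subset> nbh U b"
proof -
  have "(a,b) \<in> cpdag_marks U \<Longrightarrow> (a,b) \<in> U" unfolding cpdag_marks_def by blast
  moreover have "(a,b) \<in> U \<Longrightarrow> (b,a) \<in> U" using Usym by blast
  ultimately show ?thesis unfolding cpdag_dir_def using mark_iff[of a b] mark_iff[of b a] by blast
qed

lemma cc_iff: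
  assumes v: "v \<in> vset n"
  shows "w \<in> chain_comp U v \<longleftrightarrow> w \<in> vset n \<and> nbh U w = nbh U v"
proof
  assume "w \<in> chain_comp U v"
  then have "(v,w) \<in> (cpdag_undir U)\<^sup>*" unfolding chain_comp_def by simp
  then show "w \<in> vset n \<and> nbh U w = nbh U v"
  proof (induction rule: rtrancl_induct)
    case base then show ?case using v by simp
  next
    case (step y z) then show ?case using undir_iff[of y z] U1 by auto
  qed
next
  assume w: "w \<in> vset n \<and> nbh U w = nbh U v"
  show "w \<in> chain_comp U v"
  proof (cases "w = v")
    case True then show ?thesis unfolding chain_comp_def by simp
  next
    case False
    have "w \<in> nbh U v" using w unfolding nbh_def by blast
    then have "(v,w) \<in> U" using False unfolding nbh_def by blast
    then have "(v,w) \<in> cpdag_undir U" using undir_iff w by simp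
    then show ?thesis unfolding chain_comp_def by simp
  qed
qed

lemma cc_eq:
  assumes "v \<in> vset n" "w \<in> vset n"
  shows "chain_comp U v = chain_comp U w \<longleftrightarrow> nbh U v = nbh U w"
proof
  assume "chain_comp U v = chain_comp U w"
  moreover have "v \<in> chain_comp U v" using cc_iff[OF assms(1)] assms(1) by simp
  ultimately have "v \<in> chain_comp U w" by simp
  then show "nbh U v = nbh U w" using cc_iff[OF assms(2)] by simp
next
  assume "nbh U v = nbh U w"
  then show "chain_comp U v = chain_comp U w"
    using cc_iff[OF assms(1)] cc_iff[OF assms(2)] by auto
qed

lemma memP:
  assumes v: "v \<in> vset n"
  shows "(v \<in> C \<and> C \<in> chain_comp U ` vset n) \<longleftrightarrow> C = chain_comp U v"
proof
  assume "v \<in> C \<and> C \<in> chain_comp U ` vset n"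
  then obtain u where u: "u \<in> vset n" "C = chain_comp U u" "v \<in> chain_comp U u" by blast
  then have "nbh U v = nbh U u" using cc_iff by blast
  then show "C = chain_comp U v" using cc_eq[OF v u(1)] u(2) by simp
next
  assume "C = chain_comp U v"
  then show "v \<in> C \<and> C \<in> chain_comp U ` vset n" using v cc_iff[OF v] by blast
qed

lemma E_iff: "(C,C') \<in> snd (dag_reduction n U) \<longleftrightarrow>
    (\<exists>a b. C = chain_comp U a \<and> C' = chain_comp U b \<and> (a,b) \<in> U \<and> nbh U a \<subset> nbh U b)"
  unfolding dag_reduction_def snd_conv dir_iff[symmetric] by blast

lemma dir_vset: "(a,b) \<in> U \<Longrightarrow> a \<in> vset n \<and> b \<in> vset n" using U1 by blast

lemma E_cc:
  assumes "(C,C') \<in> snd (dag_reduction n U)"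
  obtains a b where "a \<in> vset n" "b \<in> vset n" "C = chain_comp U a" "C' = chain_comp U b"
    "(a,b) \<in> U" "nbh U a \<subset> nbh U b"
proof -
  from assms obtain a b where ab: "C = chain_comp U a" "C' = chain_comp U b" "(a,b) \<in> U" "nbh U a \<subset> nbh U b"
    unfolding E_iff by blast
  then show ?thesis using that dir_vset[OF ab(3)] by blast
qed

lemma recov_eq: "recov n (dag_reduction n U) = U"
proof (rule equalityI[OF subrelI subrelI])
  fix v w assume "(v,w) \<in> U"
  then have x: "(v,w) = (v,w)" "(v,w) \<in> U" by auto
  have vw: "v \<in> vset n" "w \<in> vset n" "v \<noteq> w" using x(2) U1 Uirr by auto
  have P: "fst (dag_reduction n U) = chain_comp U ` vset n" unfolding dag_reduction_def by simp
  have Cv: "chain_comp U v \<in> fst (dag_reduction n U)" "v \<in> chain_comp U v"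
    using memP[OF vw(1)] P by auto
  have Cw: "chain_comp U w \<in> fst (dag_reduction n U)" "w \<in> chain_comp U w"
    using memP[OF vw(2)] P by auto
  have "chain_comp U v = chain_comp U w \<or> (chain_comp U v, chain_comp U w) \<in> snd (dag_reduction n U)
     \<or> (chain_comp U w, chain_comp U v) \<in> snd (dag_reduction n U)
     \<or> (\<exists>X. (X, chain_comp U v) \<in> snd (dag_reduction n U) \<and> (X, chain_comp U w) \<in> snd (dag_reduction n U))"
  proof (cases "nbh U v = nbh U w")
    case True then show ?thesis using cc_eq[OF vw(1,2)] by simp
  next
    case False
    obtain s where s: "s \<in> nbh U v" "s \<in> nbh U w" "nbh U s \<subseteq> nbh U v" "nbh U s \<subseteq> nbh U w"
      using Usrc x(2) by blast
    show ?thesis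
    proof (cases "nbh U s = nbh U v")
      case True
      then have "nbh U v \<subset> nbh U w" using s False by auto
      then show ?thesis using E_iff x(2) by blast
    next
      case nv: False
      show ?thesis
      proof (cases "nbh U s = nbh U w")
        case True
        then have "nbh U w \<subset> nbh U v" using s False by auto
        moreover have "(w,v) \<in> U" using Usym x(2) by blast
        ultimately show ?thesis using E_iff by blast
      next
        case nw: False
        have "s \<noteq> v" "s \<noteq> w" using nv nw by auto
        then have "(s,v) \<in> U" "(s,w) \<in> U" using s(1,2) nbh_sym unfolding nbh_def by auto
        moreover have "nbh U s \<subset> nbh U v" "nbh U s \<subset> nbh U w" using s nv nw by auto
        ultimately show ?thesis using E_iff by blast
      qed
    qed
  qed
  note d = this
  show "(v,w) \<in> recov n (dag_reduction n U)"
  proof -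
    have "\<exists>C\<in>fst (dag_reduction n U). \<exists>C'\<in>fst (dag_reduction n U). v \<in> C \<and> w \<in> C' \<and>
        (C = C' \<or> (C,C') \<in> snd (dag_reduction n U) \<or> (C',C) \<in> snd (dag_reduction n U) \<or> (\<exists>X. (X,C) \<in> snd (dag_reduction n U) \<and> (X,C') \<in> snd (dag_reduction n U)))"
      apply (rule bexI[of _ "chain_comp U v"])
       apply (rule bexI[of _ "chain_comp U w"])
      using d Cv Cw by simp_all
    then show ?thesis unfolding recov_def mem_Collect_eq prod.case using vw by blast
  qed
next
  fix v w assume "(v,w) \<in> recov n (dag_reduction n U)"
  then have "v \<in> vset n \<and> w \<in> vset n \<and> v \<noteq> w \<and>
     (\<exists>C\<in>fst (dag_reduction n U). \<exists>C'\<in>fst (dag_reduction n U). v \<in> C \<and> w \<in> C' \<and>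
        (C = C' \<or> (C,C') \<in> snd (dag_reduction n U) \<or> (C',C) \<in> snd (dag_reduction n U) \<or> (\<exists>X. (X,C) \<in> snd (dag_reduction n U) \<and> (X,C') \<in> snd (dag_reduction n U))))"
    unfolding recov_def mem_Collect_eq prod.case .
  then obtain C C' where x: "(v,w) = (v,w)" "v \<in> vset n" "w \<in> vset n" "v \<noteq> w"
    "C \<in> fst (dag_reduction n U)" "C' \<in> fst (dag_reduction n U)" "v \<in> C" "w \<in> C'"
    and cs: "C = C' \<or> (C,C') \<in> snd (dag_reduction n U) \<or> (C',C) \<in> snd (dag_reduction n U) \<or>
             (\<exists>X. (X,C) \<in> snd (dag_reduction n U) \<and> (X,C') \<in> snd (dag_reduction n U))"
    by blast
  have P: "fst (dag_reduction n U) = chain_comp U ` vset n" unfolding dag_reduction_def by simp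
  have C: "C = chain_comp U v" using memP[OF x(2), of C] x(5,7) P by blast
  have C': "C' = chain_comp U w" using memP[OF x(3), of C'] x(6,8) P by blast
  have ncc: "chain_comp U a = chain_comp U u \<Longrightarrow> a \<in> vset n \<Longrightarrow> u \<in> vset n \<Longrightarrow> nbh U a = nbh U u" for a u
    using cc_eq by blast
  have "v \<in> nbh U w"
    using cs
  proof (elim disjE exE conjE)
    assume "C = C'"
    then have "nbh U v = nbh U w" using C C' ncc[of v w] x(2,3) by simp
    then show ?thesis unfolding nbh_def by blast
  next
    assume "(C,C') \<in> snd (dag_reduction n U)"
    then obtain a b where ab: "a \<in> vset n" "b \<in> vset n" "C = chain_comp U a" "C' = chain_comp U b" "nbh U a \<subset> nbh U b"
      by (rule E_cc) blast
    have "nbh U v = nbh U a" using ncc[of v a] ab(1,3) C x(2) by simp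
    moreover have "nbh U w = nbh U b" using ncc[of w b] ab(2,4) C' x(3) by simp
    ultimately show ?thesis using ab(5) unfolding nbh_def by blast
  next
    assume "(C',C) \<in> snd (dag_reduction n U)"
    then obtain a b where ab: "a \<in> vset n" "b \<in> vset n" "C' = chain_comp U a" "C = chain_comp U b" "nbh U a \<subset> nbh U b"
      by (rule E_cc) blast
    have "nbh U w = nbh U a" using ncc[of w a] ab(1,3) C' x(3) by simp
    moreover have "nbh U v = nbh U b" using ncc[of v b] ab(2,4) C x(2) by simp
    ultimately have "w \<in> nbh U v" using ab(5) unfolding nbh_def by blast
    then show ?thesis using nbh_sym by blast
  next
    fix X assume h1: "(X,C) \<in> snd (dag_reduction n U)" and h2: "(X,C') \<in> snd (dag_reduction n U)"
    obtain x1 a where xa: "x1 \<in> vset n" "a \<in> vset n" "X = chain_comp U x1" "C = chain_comp U a" "nbh U x1 \<subset> nbh U a"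
      using h1 by (rule E_cc) blast
    obtain y b where yb: "y \<in> vset n" "b \<in> vset n" "X = chain_comp U y" "C' = chain_comp U b" "(y,b) \<in> U"
      using h2 by (rule E_cc) blast
    have "nbh U x1 = nbh U y" using ncc[of x1 y] xa(1,3) yb(1,3) by simp
    moreover have "nbh U v = nbh U a" using ncc[of v a] xa(2,4) C x(2) by simp
    moreover have "nbh U w = nbh U b" using ncc[of w b] yb(2,4) C' x(3) by simp
    moreover have "b \<in> nbh U y" using yb(5) unfolding nbh_def by blast
    ultimately have "b \<in> nbh U v" using xa(5) by auto
    then have "v \<in> nbh U b" using nbh_sym by blast
    then show ?thesis using \<open>nbh U w = nbh U b\<close> by simp
  qed
  then have "(w,v) \<in> U" using x(4) unfolding nbh_def by auto
  then show "(v,w) \<in> U" using Usym by blast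
qed

end

lemma recov_uec: "UEC_rep n U \<Longrightarrow> recov n (dag_reduction n U) = U"
  using recov_eq[OF uec_props] by blast

theorem lemma5p6:
  fixes n :: nat
  shows "inj_on (dag_reduction n) {U. UEC_rep n U} \<and>
         bij_betw (dag_reduction n) {U. UEC_rep n U} (dag_reduction n ` {U. UEC_rep n U})"
proof -
  have inj: "inj_on (dag_reduction n) {U. UEC_rep n U}"
    by (rule inj_onI) (metis mem_Collect_eq recov_uec)
  then show ?thesis by (simp add: inj_on_imp_bij_betw)
qed

end
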